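(* Let $\Gamma$ be an $n$-dimensional crystallographic group with holonomy group $F\subseteq\mathrm{GL}_n(\mathbb{Z})$. If the normaliser $N_{\mathrm{GL}_n(\mathbb{Z})}(F)$ is finite, then the Reidemeister spectrum $\mathrm{Spec}_R(\Gamma)$ is finite.
   Context: An $n$-dimensional crystallographic group is a discrete cocompact subgroup of $\mathbb{R}^n\rtimes O(n)$; it is realised inside $\mathrm{Aff}(\mathbb{R}^n)=\mathbb{R}^n\rtimes\mathrm{GL}_n(\mathbb{R})$ such that its subgroup of pure translations is exactly $\{(z,I_n)\mid z\in\mathbb{Z}^n\}$. The holonomy group is $F=\{A\mid\exists a:\ (a,A)\in\Gamma\}\subseteq\mathrm{GL}_n(\mathbb{Z})$. For an automorphism $\varphi$ of a group $G$, $R(\varphi)\in\{1,2,\dots\}\cup\{\infty\}$ is the number of classes of the relation $g\sim g'\iff\exists h\in G: g=hg'\varphi(h)^{-1}$, and $\mathrm{Spec}_R(G)=\{R(\varphi)\mid\varphi\in\mathrm{Aut}(G)\}$. *)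

theory Defs
  imports "HOL-Analysis.Analysis" "HOL-Algebra.Group" "HOL-Library.Extended_Nat"
begin

text \<open>Affine maps of R^n: pairs (a, A) acting by x \<mapsto> a + A x.\<close>
type_synonym 'n aff = "(real^'n) \<times> (real^'n^'n)"

definition aff_mult :: "'n::finite aff \<Rightarrow> 'n aff \<Rightarrow> 'n aff" where
  "aff_mult g h = (fst g + snd g *v fst h, snd g ** snd h)"

definition aff_inv :: "'n::finite aff \<Rightarrow> 'n aff" where
  "aff_inv g = (- (matrix_inv (snd g) *v fst g), matrix_inv (snd g))"

definition aff_apply :: "'n::finite aff \<Rightarrow> real^'n \<Rightarrow> real^'n" where
  "aff_apply g x = fst g + snd g *v x"

definition aff_group :: "'n::finite aff monoid" where
  "aff_group = \<lparr>carrier = {g. invertible (snd g)}, mult = aff_mult, one = (0, mat 1)\<rparr>"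

definition discrete_set :: "'a::metric_space set \<Rightarrow> bool" where
  "discrete_set S \<longleftrightarrow> (\<forall>x\<in>S. \<exists>e>0. \<forall>y\<in>S. dist y x < e \<longrightarrow> y = x)"

definition cocompact_aff :: "'n::finite aff set \<Rightarrow> bool" where
  "cocompact_aff G \<longleftrightarrow> (\<exists>K. compact K \<and> (\<Union>g\<in>G. aff_apply g ` K) = UNIV)"

definition crystallographic_iso :: "'n::finite aff set \<Rightarrow> bool" where
  "crystallographic_iso G \<longleftrightarrow> subgroup G aff_group \<and>
      (\<forall>g\<in>G. orthogonal_matrix (snd g)) \<and> discrete_set G \<and> cocompact_aff G"

definition int_vec :: "real^'n \<Rightarrow> bool" where
  "int_vec z \<longleftrightarrow> (\<forall>i. z $ i \<in> \<int>)"

definition int_mat :: "real^'n^'m \<Rightarrow> bool" where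
  "int_mat A \<longleftrightarrow> (\<forall>i j. A $ i $ j \<in> \<int>)"

text \<open>An n-dimensional crystallographic group realised in Aff(R^n) (i.e. affinely conjugate
  to a discrete cocompact subgroup of R^n \<rtimes> O(n)) whose pure translations are exactly Z^n.\<close>
definition crystallographic :: "'n::finite aff set \<Rightarrow> bool" where
  "crystallographic \<Gamma> \<longleftrightarrow> subgroup \<Gamma> aff_group \<and>
     (\<exists>g\<in>carrier aff_group. crystallographic_iso ((\<lambda>\<gamma>. aff_mult g (aff_mult \<gamma> (aff_inv g))) ` \<Gamma>)) \<and>
     {\<gamma>\<in>\<Gamma>. snd \<gamma> = mat 1} = {(z, mat 1) | z. int_vec z}"

definition holonomy :: "'n::finite aff set \<Rightarrow> (real^'n^'n) set" where
  "holonomy \<Gamma> = {A. \<exists>a. (a, A) \<in> \<Gamma>}"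

definition GL_Z :: "(real^'n^'n::finite) set" where
  "GL_Z = {P. int_mat P \<and> invertible P \<and> int_mat (matrix_inv P)}"

definition normaliser_GLZ :: "(real^'n^'n::finite) set \<Rightarrow> (real^'n^'n) set" where
  "normaliser_GLZ F = {P\<in>GL_Z. (\<lambda>A. P ** A ** matrix_inv P) ` F = F}"

definition reid_classes :: "('a, 'b) monoid_scheme \<Rightarrow> ('a \<Rightarrow> 'a) \<Rightarrow> 'a set set" where
  "reid_classes G \<phi> = (\<lambda>g. {g'\<in>carrier G. \<exists>h\<in>carrier G.
        g' = h \<otimes>\<^bsub>G\<^esub> g \<otimes>\<^bsub>G\<^esub> inv\<^bsub>G\<^esub> (\<phi> h)}) ` carrier G"

definition reid_number :: "('a, 'b) monoid_scheme \<Rightarrow> ('a \<Rightarrow> 'a) \<Rightarrow> enat" where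
  "reid_number G \<phi> = (if finite (reid_classes G \<phi>) then enat (card (reid_classes G \<phi>)) else \<infinity>)"

definition reid_spectrum :: "('a, 'b) monoid_scheme \<Rightarrow> enat set" where
  "reid_spectrum G = reid_number G ` iso G G"

end

theory Submission
  imports Defs
begin

lemma minv: fixes A :: "real^'n^'n"
  assumes "invertible A" shows "A ** matrix_inv A = mat 1" "matrix_inv A ** A = mat 1"
proof -
  have "A ** matrix_inv A = mat 1 \<and> matrix_inv A ** A = mat 1"
    unfolding matrix_inv_def using assms unfolding invertible_def by (rule someI_ex)
  then show "A ** matrix_inv A = mat 1" "matrix_inv A ** A = mat 1" by auto
qed

lemma minv_inv: fixes A :: "real^'n^'n"
  assumes "invertible A" shows "invertible (matrix_inv A)"
  using minv[OF assms] unfolding invertible_def by blast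

lemma minv_unique: fixes A B :: "real^'n^'n"
  assumes "A ** B = mat 1" shows "matrix_inv A = B"
proof -
  have i: "invertible A" using assms invertible_right_inverse by blast
  have "B ** A = mat 1" using assms matrix_left_right_inverse by blast
  have "matrix_inv A = matrix_inv A ** (A ** B)" using assms by simp
  also have "\<dots> = B" by (simp add: matrix_mul_assoc minv(2)[OF i])
  finally show ?thesis .
qed

lemma minv_1[simp]: "matrix_inv (mat 1 :: real^'n^'n) = mat 1"
  by (rule minv_unique) simp

lemma mvneg: "(A::real^'n^'m) *v (- v) = - (A *v v)"
  by (simp add: matrix_vector_mult_def vec_eq_iff sum_negf)

lemma aff_group_group: "group (aff_group :: 'n::finite aff monoid)"
proof (rule groupI)
  fix x y :: "'n aff" assume "x \<in> carrier aff_group" "y \<in> carrier aff_group"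
  then show "x \<otimes>\<^bsub>aff_group\<^esub> y \<in> carrier aff_group"
    by (auto simp: aff_group_def aff_mult_def intro: invertible_mult)
next
  show "\<one>\<^bsub>aff_group\<^esub> \<in> carrier (aff_group :: 'n aff monoid)"
    by (auto simp: aff_group_def invertible_def)
next
  fix x y z :: "'n aff"
  show "x \<otimes>\<^bsub>aff_group\<^esub> y \<otimes>\<^bsub>aff_group\<^esub> z = x \<otimes>\<^bsub>aff_group\<^esub> (y \<otimes>\<^bsub>aff_group\<^esub> z)"
    by (simp add: aff_group_def aff_mult_def matrix_mul_assoc matrix_vector_mul_assoc
         matrix_vector_right_distrib add.assoc)
next
  fix x :: "'n aff" assume "x \<in> carrier aff_group"
  then show "\<one>\<^bsub>aff_group\<^esub> \<otimes>\<^bsub>aff_group\<^esub> x = x"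
    by (simp add: aff_group_def aff_mult_def)
next
  fix x :: "'n aff" assume x: "x \<in> carrier aff_group"
  then have i: "invertible (snd x)" by (simp add: aff_group_def)
  show "\<exists>y\<in>carrier aff_group. y \<otimes>\<^bsub>aff_group\<^esub> x = \<one>\<^bsub>aff_group\<^esub>"
    apply (rule bexI[of _ "aff_inv x"])
    using minv[OF i] minv_inv[OF i]
    by (auto simp: aff_group_def aff_mult_def aff_inv_def matrix_vector_mul_assoc)
qed

lemma aff_inv_carrier: "g \<in> carrier aff_group \<Longrightarrow> aff_inv g \<in> carrier aff_group"
  using minv_inv by (auto simp: aff_group_def aff_inv_def)

lemma aff_inv_eq: assumes "g \<in> carrier aff_group"
  shows "inv\<^bsub>aff_group\<^esub> g = aff_inv g"
proof -
  have i: "invertible (snd g)" using assms by (simp add: aff_group_def)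
  have "aff_mult (aff_inv g) g = (0, mat 1)"
    using minv[OF i] by (auto simp: aff_mult_def aff_inv_def)
  then have "aff_inv g \<otimes>\<^bsub>aff_group\<^esub> g = \<one>\<^bsub>aff_group\<^esub>" by (simp add: aff_group_def)
  then show ?thesis
    using group.inv_equality[OF aff_group_group] assms aff_inv_carrier[OF assms] by blast
qed

lemma fin_mats: assumes "finite S"
  shows "finite {A::real^'n::finite^'m::finite. \<forall>i j. A$i$j \<in> S}"
proof -
  have "{A::real^'n^'m. \<forall>i j. A$i$j \<in> S} \<subseteq> (\<lambda>f. \<chi> i j. f i j) ` (PiE UNIV (\<lambda>_. PiE UNIV (\<lambda>_. S)))"
  proof
    fix A :: "real^'n^'m" assume "A \<in> {A. \<forall>i j. A$i$j \<in> S}"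
    then show "A \<in> (\<lambda>f. \<chi> i j. f i j) ` (PiE UNIV (\<lambda>_. PiE UNIV (\<lambda>_. S)))"
      by (intro image_eqI[of _ _ "\<lambda>i j. A$i$j"]) (auto simp: vec_eq_iff)
  qed
  moreover have "finite (PiE (UNIV::'m set) (\<lambda>_. PiE (UNIV::'n set) (\<lambda>_. S)))"
    by (intro finite_PiE) (auto simp: assms)
  ultimately show ?thesis by (meson finite_surj)
qed

lemma int_vec_axis: "int_vec (axis j 1 :: real^'n)"
  by (auto simp: int_vec_def axis_def)

lemma mv_axis_nth: "((A::real^'n^'m) *v axis j 1) $ i = A $ i $ j"
  by (simp add: matrix_vector_mult_basis column_def)

lemma orth_entry: assumes "orthogonal_matrix (Q::real^'n^'n)" shows "\<bar>Q$k$l\<bar> \<le> 1"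
proof -
  have "norm (column l Q) = 1" using assms orthogonal_matrix_orthonormal_columns by blast
  moreover have "\<bar>column l Q $ k\<bar> \<le> norm (column l Q)" by (rule component_le_norm_cart)
  ultimately show ?thesis by (simp add: column_def)
qed

lemma prod_entry_bound:
  fixes X Y Q :: "real^'n^'n"
  assumes "\<forall>k l. \<bar>Q$k$l\<bar> \<le> 1"
  shows "\<bar>(X ** Q ** Y)$i$j\<bar> \<le> (\<Sum>i'\<in>UNIV. \<Sum>j'\<in>UNIV. \<Sum>l\<in>UNIV. \<Sum>k\<in>UNIV. \<bar>X$i'$k\<bar> * \<bar>Y$l$j'\<bar>)"
proof -
  have "\<bar>(X ** Q ** Y)$i$j\<bar> = \<bar>\<Sum>l\<in>UNIV. (\<Sum>k\<in>UNIV. X$i$k * Q$k$l) * Y$l$j\<bar>"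
    unfolding matrix_matrix_mult_def by simp
  also have "\<dots> \<le> (\<Sum>l\<in>UNIV. \<Sum>k\<in>UNIV. \<bar>X$i$k\<bar> * \<bar>Y$l$j\<bar>)"
  proof -
    have "\<bar>(\<Sum>k\<in>UNIV. X$i$k * Q$k$l) * Y$l$j\<bar> \<le> (\<Sum>k\<in>UNIV. \<bar>X$i$k\<bar> * \<bar>Y$l$j\<bar>)" for l
    proof -
      have "\<bar>(\<Sum>k\<in>UNIV. X$i$k * Q$k$l) * Y$l$j\<bar> = \<bar>(\<Sum>k\<in>UNIV. X$i$k * Q$k$l * Y$l$j)\<bar>"
        by (simp add: sum_distrib_right)
      also have "\<dots> \<le> (\<Sum>k\<in>UNIV. \<bar>X$i$k * Q$k$l * Y$l$j\<bar>)" by (rule sum_abs)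
      also have "\<dots> \<le> (\<Sum>k\<in>UNIV. \<bar>X$i$k\<bar> * \<bar>Y$l$j\<bar>)"
      proof (rule sum_mono)
        fix k
        have "\<bar>X$i$k * Q$k$l * Y$l$j\<bar> = \<bar>X$i$k\<bar> * \<bar>Q$k$l\<bar> * \<bar>Y$l$j\<bar>" by (simp add: abs_mult)
        also have "\<dots> \<le> \<bar>X$i$k\<bar> * 1 * \<bar>Y$l$j\<bar>"
          using assms by (intro mult_right_mono mult_left_mono) auto
        finally show "\<bar>X$i$k * Q$k$l * Y$l$j\<bar> \<le> \<bar>X$i$k\<bar> * \<bar>Y$l$j\<bar>" by simp
      qed
      finally show ?thesis .
    qed
    then have "(\<Sum>l\<in>UNIV. \<bar>(\<Sum>k\<in>UNIV. X$i$k * Q$k$l) * Y$l$j\<bar>) \<le> (\<Sum>l\<in>UNIV. \<Sum>k\<in>UNIV. \<bar>X$i$k\<bar> * \<bar>Y$l$j\<bar>)"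
      by (rule sum_mono)
    then show ?thesis by (rule order_trans[OF sum_abs])
  qed
  also have "\<dots> \<le> (\<Sum>j'\<in>UNIV. \<Sum>l\<in>UNIV. \<Sum>k\<in>UNIV. \<bar>X$i$k\<bar> * \<bar>Y$l$j'\<bar>)"
    by (rule member_le_sum[where f="\<lambda>j'. \<Sum>l\<in>UNIV. \<Sum>k\<in>UNIV. \<bar>X$i$k\<bar> * \<bar>Y$l$j'\<bar>"])
       (auto intro!: sum_nonneg)
  also have "\<dots> \<le> (\<Sum>i'\<in>UNIV. \<Sum>j'\<in>UNIV. \<Sum>l\<in>UNIV. \<Sum>k\<in>UNIV. \<bar>X$i'$k\<bar> * \<bar>Y$l$j'\<bar>)"
    by (rule member_le_sum[where f="\<lambda>i'. \<Sum>j'\<in>UNIV. \<Sum>l\<in>UNIV. \<Sum>k\<in>UNIV. \<bar>X$i'$k\<bar> * \<bar>Y$l$j'\<bar>"])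
       (auto intro!: sum_nonneg)
  finally show ?thesis .
qed

locale cryst =
  fixes \<Gamma> :: "'n::finite aff set"
  assumes cr: "crystallographic \<Gamma>"
begin

abbreviation "G \<equiv> aff_group\<lparr>carrier := \<Gamma>\<rparr>"

lemma sub: "subgroup \<Gamma> aff_group" using cr by (simp add: crystallographic_def)

lemma grp: "group G" by (rule subgroup.subgroup_is_group[OF sub aff_group_group])

lemma carG[simp]: "carrier G = \<Gamma>" by simp
lemma mulA[simp]: "x \<otimes>\<^bsub>aff_group\<^esub> y = aff_mult x y" by (simp add: aff_group_def)
lemma mulG[simp]: "x \<otimes>\<^bsub>G\<^esub> y = aff_mult x y" by (simp add: aff_group_def)
lemma oneG[simp]: "\<one>\<^bsub>G\<^esub> = (0, mat 1)" by (simp add: aff_group_def)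

lemma inA: "x \<in> \<Gamma> \<Longrightarrow> x \<in> carrier aff_group" using subgroup.subset[OF sub] by blast
lemma invt: "x \<in> \<Gamma> \<Longrightarrow> invertible (snd x)" using inA by (simp add: aff_group_def)

lemma invG: assumes "x \<in> \<Gamma>" shows "inv\<^bsub>G\<^esub> x = aff_inv x"
proof -
  have "inv\<^bsub>G\<^esub> x = inv\<^bsub>aff_group\<^esub> x" by (rule group.m_inv_consistent[OF aff_group_group sub assms])
  then show ?thesis using aff_inv_eq[OF inA[OF assms]] by simp
qed

lemma mul_cl: "x \<in> \<Gamma> \<Longrightarrow> y \<in> \<Gamma> \<Longrightarrow> aff_mult x y \<in> \<Gamma>"
  using monoid.m_closed[OF group.is_monoid[OF grp], of x y] by simp

lemma inv_cl: "x \<in> \<Gamma> \<Longrightarrow> aff_inv x \<in> \<Gamma>"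
  using group.inv_closed[OF grp, of x] invG by simp

lemma L_iff: "(x \<in> \<Gamma> \<and> snd x = mat 1) \<longleftrightarrow> (\<exists>z. x = (z, mat 1) \<and> int_vec z)"
proof -
  have "{\<gamma>\<in>\<Gamma>. snd \<gamma> = mat 1} = {(z, mat 1) | z. int_vec z}"
    using cr by (simp add: crystallographic_def)
  then have "x \<in> {\<gamma>\<in>\<Gamma>. snd \<gamma> = mat 1} \<longleftrightarrow> x \<in> {(z, mat 1) | z. int_vec z}" by simp
  then show ?thesis by simp
qed

lemma Lint: "int_vec z \<Longrightarrow> (z, mat 1) \<in> \<Gamma>" using L_iff by blast
lemma L_int: "(z, mat 1) \<in> \<Gamma> \<Longrightarrow> int_vec z" using L_iff by force

lemma conj_tr: assumes "\<gamma> \<in> \<Gamma>"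
  shows "aff_mult \<gamma> (aff_mult (z, mat 1) (aff_inv \<gamma>)) = (snd \<gamma> *v z, mat 1)"
proof -
  obtain a A where g: "\<gamma> = (a, A)" by (cases \<gamma>)
  have i: "invertible A" using invt[OF assms] g by simp
  have "a + A *v (z + - (matrix_inv A *v a)) = A *v z"
    by (simp add: matrix_vector_mult_diff_distrib matrix_vector_mul_assoc minv(1)[OF i])
  then show ?thesis using minv(1)[OF i] by (simp add: g aff_mult_def aff_inv_def)
qed

lemma holo_elem: "A \<in> holonomy \<Gamma> \<Longrightarrow> \<exists>a. (a, A) \<in> \<Gamma>" by (simp add: holonomy_def)

lemma holo_int: assumes "A \<in> holonomy \<Gamma>" shows "int_mat A"
proof -
  obtain a where g: "(a, A) \<in> \<Gamma>" using holo_elem[OF assms] by blast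
  have "int_vec (A *v axis j 1)" for j
  proof -
    have "aff_mult (a, A) (aff_mult (axis j 1, mat 1) (aff_inv (a, A))) \<in> \<Gamma>"
      by (intro mul_cl g inv_cl Lint int_vec_axis)
    then show ?thesis using conj_tr[OF g] L_int by simp
  qed
  then show ?thesis unfolding int_mat_def int_vec_def using mv_axis_nth by metis
qed

lemma holo_fin: "finite (holonomy \<Gamma>)"
proof -
  obtain g where g: "g \<in> carrier aff_group"
    and ci: "crystallographic_iso ((\<lambda>\<gamma>. aff_mult g (aff_mult \<gamma> (aff_inv g))) ` \<Gamma>)"
    using cr by (auto simp: crystallographic_def)
  define X where "X = matrix_inv (snd g)"
  define Y where "Y = snd g"
  have i: "invertible Y" using g by (simp add: aff_group_def Y_def)
  define c where "c = (\<Sum>i'\<in>UNIV. \<Sum>j'\<in>UNIV. \<Sum>l\<in>UNIV. \<Sum>k\<in>UNIV. \<bar>X$i'$k\<bar> * \<bar>Y$l$j'\<bar>)"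
  have bound: "\<bar>A$i$j\<bar> \<le> c" if A: "A \<in> holonomy \<Gamma>" for A i j
  proof -
    obtain a where aA: "(a, A) \<in> \<Gamma>" using holo_elem[OF A] by blast
    have "orthogonal_matrix (snd (aff_mult g (aff_mult (a, A) (aff_inv g))))"
      using ci aA by (auto simp: crystallographic_iso_def)
    then have o: "orthogonal_matrix (Y ** (A ** X))"
      by (simp add: aff_mult_def aff_inv_def X_def Y_def)
    have XY: "X ** Y = mat 1" unfolding X_def Y_def by (rule minv(2)[OF i[unfolded Y_def]])
    have "X ** (Y ** (A ** X)) ** Y = (X ** Y) ** A ** (X ** Y)" by (simp only: matrix_mul_assoc)
    also have "\<dots> = A" by (simp add: XY)
    finally have eq: "X ** (Y ** (A ** X)) ** Y = A" .
    have "\<forall>k l. \<bar>(Y ** (A ** X))$k$l\<bar> \<le> 1" using orth_entry[OF o] by blast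
    from prod_entry_bound[OF this, of X Y i j] show ?thesis unfolding eq c_def .
  qed
  define S where "S = (real_of_int ` {-\<lceil>c\<rceil>..\<lceil>c\<rceil>})"
  have "holonomy \<Gamma> \<subseteq> {A. \<forall>i j. A$i$j \<in> S}"
  proof (safe)
    fix A i j assume A: "A \<in> holonomy \<Gamma>"
    obtain m where m: "A$i$j = of_int m" using holo_int[OF A] unfolding int_mat_def
      by (meson Ints_cases)
    have "\<bar>real_of_int m\<bar> \<le> c" using bound[OF A, of i j] m by simp
    then have "\<bar>m\<bar> \<le> \<lceil>c\<rceil>" by linarith
    then have "m \<in> {-\<lceil>c\<rceil>..\<lceil>c\<rceil>}" by (simp add: abs_le_iff)
    then show "A$i$j \<in> S" using m S_def by blast
  qed
  moreover have "finite {A::real^'n^'n. \<forall>i j. A$i$j \<in> S}" by (rule fin_mats) (simp add: S_def)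
  ultimately show ?thesis by (rule finite_subset)
qed

end

definition tw :: "('a,'b) monoid_scheme \<Rightarrow> 'a set \<Rightarrow> ('a \<Rightarrow> 'a) \<Rightarrow> 'a \<Rightarrow> 'a set" where
  "tw G H \<phi> g = {g'\<in>carrier G. \<exists>h\<in>H. g' = h \<otimes>\<^bsub>G\<^esub> g \<otimes>\<^bsub>G\<^esub> inv\<^bsub>G\<^esub> (\<phi> h)}"

lemma reid_tw: "reid_classes G \<phi> = tw G (carrier G) \<phi> ` carrier G"
  by (simp add: reid_classes_def tw_def)

lemma tw_mem: "x \<in> tw G H \<phi> g \<longleftrightarrow> x \<in> carrier G \<and> (\<exists>h\<in>H. x = h \<otimes>\<^bsub>G\<^esub> g \<otimes>\<^bsub>G\<^esub> inv\<^bsub>G\<^esub> (\<phi> h))"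
  by (simp add: tw_def)

context group begin

lemma gh: "\<phi> \<in> hom G G \<Longrightarrow> group_hom G G \<phi>"
  by (simp add: group_hom_def group_hom_axioms_def group_axioms)

lemma tw_self: assumes "subgroup H G" "\<phi> \<in> hom G G" "g \<in> carrier G"
  shows "g \<in> tw G H \<phi> g"
proof -
  have "\<phi> \<one> = \<one>" using group_hom.hom_one[OF gh[OF assms(2)]] by simp
  then have "g = \<one> \<otimes> g \<otimes> inv (\<phi> \<one>)" using assms(3) by simp
  then show ?thesis unfolding tw_def using assms subgroup.one_closed by blast
qed

lemma tw_sub: assumes H: "subgroup H G" and ph: "\<phi> \<in> hom G G" and g: "g \<in> carrier G"
  and g': "g' \<in> tw G H \<phi> g"
  shows "tw G H \<phi> g' \<subseteq> tw G H \<phi> g"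
proof
  have HG: "H \<subseteq> carrier G" by (rule subgroup.subset[OF H])
  from g' obtain h where h: "h \<in> H" and g'eq: "g' = h \<otimes> g \<otimes> inv (\<phi> h)" unfolding tw_mem by auto
  fix x assume "x \<in> tw G H \<phi> g'"
  then have x: "x \<in> carrier G" and "\<exists>k\<in>H. x = k \<otimes> g' \<otimes> inv (\<phi> k)" unfolding tw_mem by auto
  then obtain k where k: "k \<in> H" and xeq: "x = k \<otimes> g' \<otimes> inv (\<phi> k)" by auto
  have hc: "h \<in> carrier G" "k \<in> carrier G" using h k HG by auto
  have pc: "\<phi> h \<in> carrier G" "\<phi> k \<in> carrier G" using hc ph by (auto simp: hom_def)
  have "\<phi> (k \<otimes> h) = \<phi> k \<otimes> \<phi> h" using hom_mult[OF ph hc(2) hc(1)] .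
  then have "(k \<otimes> h) \<otimes> g \<otimes> inv (\<phi> (k \<otimes> h)) = k \<otimes> (h \<otimes> (g \<otimes> (inv (\<phi> h) \<otimes> inv (\<phi> k))))"
    using hc g pc by (simp add: m_assoc inv_mult_group)
  also have "\<dots> = x" using hc g pc by (simp add: xeq g'eq m_assoc)
  finally have "x = (k \<otimes> h) \<otimes> g \<otimes> inv (\<phi> (k \<otimes> h))" by simp
  moreover have "k \<otimes> h \<in> H" using subgroup.m_closed[OF H k h] .
  ultimately show "x \<in> tw G H \<phi> g" unfolding tw_mem using x by auto
qed

lemma tw_sym: assumes H: "subgroup H G" and ph: "\<phi> \<in> hom G G" and g: "g \<in> carrier G"
  and g': "g' \<in> tw G H \<phi> g"
  shows "g \<in> tw G H \<phi> g'"
proof -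
  have HG: "H \<subseteq> carrier G" by (rule subgroup.subset[OF H])
  from g' obtain h where h: "h \<in> H" and g'eq: "g' = h \<otimes> g \<otimes> inv (\<phi> h)" unfolding tw_mem by auto
  have hc: "h \<in> carrier G" using h HG by auto
  have pc: "\<phi> h \<in> carrier G" using hc ph by (auto simp: hom_def)
  have "\<phi> (inv h) = inv (\<phi> h)" using group_hom.hom_inv[OF gh[OF ph] hc] .
  then have "inv h \<otimes> g' \<otimes> inv (\<phi> (inv h)) = inv h \<otimes> (h \<otimes> (g \<otimes> (inv (\<phi> h) \<otimes> \<phi> h)))"
    using hc g pc by (simp add: g'eq m_assoc)
  also have "\<dots> = g" using hc g pc by (simp add: m_assoc[symmetric])
  finally have "g = inv h \<otimes> g' \<otimes> inv (\<phi> (inv h))" by simp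
  moreover have "inv h \<in> H" using subgroup.m_inv_closed[OF H h] .
  ultimately show ?thesis unfolding tw_mem using g by auto
qed

lemma tw_eq: assumes H: "subgroup H G" and ph: "\<phi> \<in> hom G G" and g: "g \<in> carrier G"
  and g': "g' \<in> tw G H \<phi> g"
  shows "tw G H \<phi> g' = tw G H \<phi> g"
proof
  show "tw G H \<phi> g' \<subseteq> tw G H \<phi> g" by (rule tw_sub[OF assms])
  have g'c: "g' \<in> carrier G" using g' unfolding tw_mem by auto
  show "tw G H \<phi> g \<subseteq> tw G H \<phi> g'" by (rule tw_sub[OF H ph g'c tw_sym[OF assms]])
qed

lemma tw_mono: "H \<subseteq> H' \<Longrightarrow> tw G H \<phi> g \<subseteq> tw G H' \<phi> g"
  unfolding tw_def by blast

lemma count_le: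
  assumes L: "subgroup L G" and ph: "\<phi> \<in> hom G G"
    and fin: "finite (tw G L \<phi> ` carrier G)"
  shows "finite (reid_classes G \<phi>) \<and> card (reid_classes G \<phi>) \<le> card (tw G L \<phi> ` carrier G)"
proof -
  define rep where "rep Ob = (SOME g. g \<in> carrier G \<and> Ob = tw G L \<phi> g)" for Ob
  have S: "subgroup (carrier G) G" by (rule subgroup_self)
  have "reid_classes G \<phi> \<subseteq> (\<lambda>Ob. tw G (carrier G) \<phi> (rep Ob)) ` (tw G L \<phi> ` carrier G)"
  proof
    fix c assume "c \<in> reid_classes G \<phi>"
    then obtain g where g: "g \<in> carrier G" and c: "c = tw G (carrier G) \<phi> g" unfolding reid_tw by auto
    have "\<exists>g0. g0 \<in> carrier G \<and> tw G L \<phi> g = tw G L \<phi> g0" using g by auto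
    then have r: "rep (tw G L \<phi> g) \<in> carrier G \<and> tw G L \<phi> g = tw G L \<phi> (rep (tw G L \<phi> g))"
      unfolding rep_def by (rule someI_ex)
    define g0 where "g0 = rep (tw G L \<phi> g)"
    have g0: "g0 \<in> carrier G" "tw G L \<phi> g = tw G L \<phi> g0" using r g0_def by auto
    have "g \<in> tw G L \<phi> g0" using tw_self[OF L ph g] g0 by simp
    then have "g \<in> tw G (carrier G) \<phi> g0" using tw_mono[OF subgroup.subset[OF L]] by blast
    then have "tw G (carrier G) \<phi> g = tw G (carrier G) \<phi> g0" by (rule tw_eq[OF S ph g0(1)])
    then show "c \<in> (\<lambda>Ob. tw G (carrier G) \<phi> (rep Ob)) ` (tw G L \<phi> ` carrier G)"
      using c g g0_def by auto
  qed
  moreover have "finite ((\<lambda>Ob. tw G (carrier G) \<phi> (rep Ob)) ` (tw G L \<phi> ` carrier G))" using fin by simp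
  ultimately show ?thesis by (meson card_image_le card_mono fin finite_subset order_trans)
qed

lemma count_fin:
  assumes L: "subgroup L G" and ph: "\<phi> \<in> hom G G"
    and K: "finite K" "K \<subseteq> carrier G"
    and dec: "\<And>h. h \<in> carrier G \<Longrightarrow> \<exists>l\<in>L. \<exists>k\<in>K. h = l \<otimes> k"
    and fin: "finite (reid_classes G \<phi>)"
  shows "finite (tw G L \<phi> ` carrier G)"
proof -
  define rep where "rep c = (SOME g. g \<in> carrier G \<and> c = tw G (carrier G) \<phi> g)" for c
  define R where "R = rep ` reid_classes G \<phi>"
  have S: "subgroup (carrier G) G" by (rule subgroup_self)
  have LG: "L \<subseteq> carrier G" by (rule subgroup.subset[OF L])
  have "tw G L \<phi> ` carrier G \<subseteq> (\<lambda>(g,k). tw G L \<phi> (k \<otimes> g \<otimes> inv (\<phi> k))) ` (R \<times> K)"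
  proof
    fix Ob assume "Ob \<in> tw G L \<phi> ` carrier G"
    then obtain x where x: "x \<in> carrier G" and Ob: "Ob = tw G L \<phi> x" by auto
    have "\<exists>g0. g0 \<in> carrier G \<and> tw G (carrier G) \<phi> x = tw G (carrier G) \<phi> g0" using x by auto
    then have r: "rep (tw G (carrier G) \<phi> x) \<in> carrier G \<and> tw G (carrier G) \<phi> x = tw G (carrier G) \<phi> (rep (tw G (carrier G) \<phi> x))"
      unfolding rep_def by (rule someI_ex)
    define g0 where "g0 = rep (tw G (carrier G) \<phi> x)"
    have g0: "g0 \<in> carrier G" "tw G (carrier G) \<phi> x = tw G (carrier G) \<phi> g0" using r g0_def by auto
    have g0R: "g0 \<in> R" unfolding R_def g0_def reid_tw using x by auto
    have "x \<in> tw G (carrier G) \<phi> g0" using tw_self[OF S ph x] g0 by simp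
    then obtain h where h: "h \<in> carrier G" and xeq: "x = h \<otimes> g0 \<otimes> inv (\<phi> h)" unfolding tw_mem by auto
    obtain l k where l: "l \<in> L" and k: "k \<in> K" and hlk: "h = l \<otimes> k" using dec[OF h] by auto
    have lc: "l \<in> carrier G" and kc: "k \<in> carrier G" using l k LG K by auto
    have pc: "\<phi> l \<in> carrier G" "\<phi> k \<in> carrier G" using lc kc ph by (auto simp: hom_def)
    define y where "y = k \<otimes> g0 \<otimes> inv (\<phi> k)"
    have yc: "y \<in> carrier G" using kc g0 pc by (simp add: y_def)
    have "\<phi> h = \<phi> l \<otimes> \<phi> k" using hom_mult[OF ph lc kc] hlk by simp
    then have "x = l \<otimes> (k \<otimes> (g0 \<otimes> (inv (\<phi> k) \<otimes> inv (\<phi> l))))"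
      using lc kc pc g0 by (simp add: xeq hlk m_assoc inv_mult_group)
    also have "\<dots> = l \<otimes> y \<otimes> inv (\<phi> l)" using lc kc pc g0 by (simp add: y_def m_assoc)
    finally have "x \<in> tw G L \<phi> y" unfolding tw_mem using x l by auto
    then have "Ob = tw G L \<phi> y" using tw_eq[OF L ph yc] Ob by simp
    then show "Ob \<in> (\<lambda>(g,k). tw G L \<phi> (k \<otimes> g \<otimes> inv (\<phi> k))) ` (R \<times> K)"
      using g0R k unfolding y_def by force
  qed
  moreover have "finite (R \<times> K)" using fin K unfolding R_def by simp
  ultimately show ?thesis by (meson finite_imageI finite_subset)
qed

end

lemma aff_assoc: "aff_mult (aff_mult x y) w = aff_mult x (aff_mult y w)"
  by (simp add: aff_mult_def matrix_mul_assoc matrix_vector_mul_assoc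
         matrix_vector_right_distrib add.assoc)

context cryst begin

lemma holo_snd: "h \<in> \<Gamma> \<Longrightarrow> snd h \<in> holonomy \<Gamma>"
  unfolding holonomy_def by (intro CollectI exI[of _ "fst h"]) simp

definition "Lset = {\<gamma>\<in>\<Gamma>. snd \<gamma> = mat 1}"

definition "cc x = (\<lambda>h. aff_mult (aff_mult h x) (aff_inv h)) ` \<Gamma>"

lemma L_sub: "subgroup Lset G"
proof (rule subgroup.intro)
  show "Lset \<subseteq> carrier G" unfolding Lset_def by auto
next
  fix x y assume "x \<in> Lset" "y \<in> Lset"
  then have "x \<in> \<Gamma>" "y \<in> \<Gamma>" "snd x = mat 1" "snd y = mat 1" unfolding Lset_def by auto
  then have "aff_mult x y \<in> \<Gamma>" "snd (aff_mult x y) = mat 1" using mul_cl[of x y] by (auto simp: aff_mult_def[of x y])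
  then show "x \<otimes>\<^bsub>G\<^esub> y \<in> Lset" unfolding Lset_def by simp
next
  have "(0, mat 1) \<in> \<Gamma>" using Lint[of 0] by (simp add: int_vec_def)
  then show "\<one>\<^bsub>G\<^esub> \<in> Lset" unfolding Lset_def by simp
next
  fix x assume "x \<in> Lset"
  then have x: "x \<in> \<Gamma>" "snd x = mat 1" unfolding Lset_def by auto
  then have "aff_inv x \<in> \<Gamma>" "snd (aff_inv x) = mat 1" using inv_cl[of x] by (auto simp: aff_inv_def[of x])
  then show "inv\<^bsub>G\<^esub> x \<in> Lset" unfolding Lset_def using invG[OF x(1)] by simp
qed

definition "rep A = (SOME \<gamma>. \<gamma> \<in> \<Gamma> \<and> snd \<gamma> = A)"
definition "Kset = rep ` holonomy \<Gamma>"

lemma rep: assumes "A \<in> holonomy \<Gamma>" shows "rep A \<in> \<Gamma>" "snd (rep A) = A"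
proof -
  obtain a where "(a, A) \<in> \<Gamma>" using holo_elem[OF assms] by blast
  then have "\<exists>\<gamma>. \<gamma> \<in> \<Gamma> \<and> snd \<gamma> = A" by force
  then have "rep A \<in> \<Gamma> \<and> snd (rep A) = A" unfolding rep_def by (rule someI_ex)
  then show "rep A \<in> \<Gamma>" "snd (rep A) = A" by auto
qed

lemma K_fin: "finite Kset" "Kset \<subseteq> carrier G"
  using holo_fin rep unfolding Kset_def by auto

lemma dec: assumes h: "h \<in> carrier G" shows "\<exists>l\<in>Lset. \<exists>k\<in>Kset. h = l \<otimes>\<^bsub>G\<^esub> k"
proof -
  have hh: "h \<in> \<Gamma>" using h by simp
  have A: "snd h \<in> holonomy \<Gamma>" using holo_snd[OF hh] .
  define k where "k = rep (snd h)"
  have k: "k \<in> \<Gamma>" "snd k = snd h" using rep[OF A] k_def by auto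
  have i: "invertible (snd k)" using invt[OF k(1)] .
  define l where "l = aff_mult h (aff_inv k)"
  have "l \<in> \<Gamma>" unfolding l_def by (intro mul_cl hh inv_cl k)
  moreover have "snd l = mat 1" unfolding l_def using minv(1)[OF i] k(2) by (simp add: aff_mult_def aff_inv_def)
  ultimately have lL: "l \<in> Lset" unfolding Lset_def by simp
  have "aff_mult l k = h"
    unfolding l_def aff_assoc using minv(2)[OF i]
    by (simp add: aff_mult_def aff_inv_def matrix_vector_mul_assoc mvneg)
  moreover have "k \<in> Kset" unfolding Kset_def k_def using A by simp
  ultimately show ?thesis using lL by auto
qed

lemma conj_G: "h \<in> \<Gamma> \<Longrightarrow> h \<otimes>\<^bsub>G\<^esub> x \<otimes>\<^bsub>G\<^esub> inv\<^bsub>G\<^esub> h = aff_mult (aff_mult h x) (aff_inv h)"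
  using invG by simp

lemma cc_L: assumes "int_vec z" shows "finite (cc (z, mat 1))"
proof -
  have "cc (z, mat 1) \<subseteq> (\<lambda>A. (A *v z, mat 1)) ` holonomy \<Gamma>"
  proof
    fix y assume "y \<in> cc (z, mat 1)"
    then obtain h where h: "h \<in> \<Gamma>" and y: "y = aff_mult (aff_mult h (z, mat 1)) (aff_inv h)"
      unfolding cc_def by auto
    have "y = (snd h *v z, mat 1)" using conj_tr[OF h] y by (simp add: aff_assoc)
    moreover have "snd h \<in> holonomy \<Gamma>" using holo_snd[OF h] .
    ultimately show "y \<in> (\<lambda>A. (A *v z, mat 1)) ` holonomy \<Gamma>" by auto
  qed
  then show ?thesis using holo_fin finite_subset by blast
qed

lemma int_vec_scale: "int_vec v \<Longrightarrow> c \<in> \<int> \<Longrightarrow> int_vec (c *s v)"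
  by (auto simp: int_vec_def)

lemma int_vec_scaleR: "int_vec v \<Longrightarrow> c \<in> \<int> \<Longrightarrow> int_vec (c *\<^sub>R v)"
  by (auto simp: int_vec_def)

lemma cc_inf: assumes y: "y \<in> \<Gamma>" and B: "snd y \<noteq> mat 1" shows "infinite (cc y)"
proof
  assume fin: "finite (cc y)"
  obtain b B where yy: "y = (b, B)" by (cases y)
  have "\<exists>j. B *v axis j 1 \<noteq> axis j 1"
  proof (rule ccontr)
    assume "\<not> ?thesis"
    then have h: "B *v axis j 1 = axis j 1" for j by auto
    have "B $ i $ j = mat 1 $ i $ j" for i j
    proof -
      have "B $ i $ j = (B *v axis j 1) $ i" by (simp add: mv_axis_nth)
      also have "\<dots> = axis j 1 $ i" using h by simp
      finally show ?thesis by (simp add: axis_def mat_def)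
    qed
    then have "B = mat 1" by (simp add: vec_eq_iff)
    then show False using B yy by simp
  qed
  then obtain j where j: "B *v axis j 1 \<noteq> axis j 1" by blast
  define w where "w = axis j 1 - B *v axis j 1"
  have "w \<noteq> 0" using j unfolding w_def by simp
  then obtain i where wi: "w $ i \<noteq> 0" by (auto simp: vec_eq_iff)
  define f where "f k = (b + real k *\<^sub>R w, B)" for k :: nat
  have "inj f"
  proof (rule injI)
    fix k1 k2 assume "f k1 = f k2"
    then have "real k1 *\<^sub>R w = real k2 *\<^sub>R w" unfolding f_def by simp
    then have "real k1 * w $ i = real k2 * w $ i" by (metis vector_scaleR_component real_scaleR_def)
    then show "k1 = k2" using wi by simp
  qed
  moreover have "range f \<subseteq> cc y"
  proof
    fix x assume "x \<in> range f"
    then obtain k where x: "x = f k" by auto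
    define v where "v = real k *\<^sub>R axis j (1::real)"
    have vi: "int_vec v" unfolding v_def by (intro int_vec_scaleR int_vec_axis) simp
    have "aff_mult (aff_mult (v, mat 1) y) (aff_inv (v, mat 1)) = (v + b - B *v v, B)"
      by (simp add: yy aff_mult_def aff_inv_def mvneg)
    also have "\<dots> = f k" unfolding f_def v_def w_def
      by (simp add: matrix_vector_mult_scaleR scaleR_diff_right)
    finally have "x = aff_mult (aff_mult (v, mat 1) y) (aff_inv (v, mat 1))" using x by simp
    then show "x \<in> cc y" unfolding cc_def using Lint[OF vi] by blast
  qed
  ultimately have "infinite (cc y)"
    using finite_imageD[of f UNIV] finite_subset[of "range f" "cc y"] by auto
  then show False using fin by simp
qed

end

lemma int_mat_vec: "int_mat A \<Longrightarrow> int_vec z \<Longrightarrow> int_vec ((A::real^'n::finite^'m) *v z)"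
  unfolding int_mat_def int_vec_def matrix_vector_mult_def
  by (auto intro!: Ints_sum Ints_mult)

lemma mat_eq_axis: "(\<And>j. (A::real^'n^'m) *v axis j 1 = B *v axis j 1) \<Longrightarrow> A = B"
  by (metis mv_axis_nth vec_eq_iff)

context cryst begin

lemma iso_hom: "\<phi> \<in> iso G G \<Longrightarrow> \<phi> \<in> hom G G" by (simp add: iso_iff)
lemma iso_img: "\<phi> \<in> iso G G \<Longrightarrow> \<phi> ` \<Gamma> = \<Gamma>" by (simp add: iso_iff)
lemma iso_cl: "\<phi> \<in> iso G G \<Longrightarrow> x \<in> \<Gamma> \<Longrightarrow> \<phi> x \<in> \<Gamma>" using iso_img by blast

lemma phi_conj: assumes ph: "\<phi> \<in> iso G G" and h: "h \<in> \<Gamma>" and x: "x \<in> \<Gamma>"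
  shows "\<phi> (aff_mult (aff_mult h x) (aff_inv h)) = aff_mult (aff_mult (\<phi> h) (\<phi> x)) (aff_inv (\<phi> h))"
proof -
  have hm: "\<phi> \<in> hom G G" by (rule iso_hom[OF ph])
  have gh: "group_hom G G \<phi>" by (rule group.gh[OF grp hm])
  have "\<phi> (h \<otimes>\<^bsub>G\<^esub> x \<otimes>\<^bsub>G\<^esub> inv\<^bsub>G\<^esub> h) = \<phi> h \<otimes>\<^bsub>G\<^esub> \<phi> x \<otimes>\<^bsub>G\<^esub> inv\<^bsub>G\<^esub> (\<phi> h)"
  proof -
    have c: "h \<otimes>\<^bsub>G\<^esub> x \<in> carrier G" "inv\<^bsub>G\<^esub> h \<in> carrier G"
      using h x group.inv_closed[OF grp] monoid.m_closed[OF group.is_monoid[OF grp]] by auto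
    have "\<phi> (h \<otimes>\<^bsub>G\<^esub> x \<otimes>\<^bsub>G\<^esub> inv\<^bsub>G\<^esub> h) = \<phi> (h \<otimes>\<^bsub>G\<^esub> x) \<otimes>\<^bsub>G\<^esub> \<phi> (inv\<^bsub>G\<^esub> h)"
      using hom_mult[OF hm c] .
    also have "\<phi> (h \<otimes>\<^bsub>G\<^esub> x) = \<phi> h \<otimes>\<^bsub>G\<^esub> \<phi> x" using hom_mult[OF hm, of h x] h x by simp
    also have "\<phi> (inv\<^bsub>G\<^esub> h) = inv\<^bsub>G\<^esub> (\<phi> h)" using group_hom.hom_inv[OF gh, of h] h by simp
    finally show ?thesis .
  qed
  then show ?thesis using conj_G[OF h, of x] conj_G[OF iso_cl[OF ph h], of "\<phi> x"] by simp
qed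

lemma cc_iso: assumes ph: "\<phi> \<in> iso G G" and x: "x \<in> \<Gamma>" shows "cc (\<phi> x) = \<phi> ` cc x"
proof -
  have "cc (\<phi> x) = (\<lambda>h. aff_mult (aff_mult h (\<phi> x)) (aff_inv h)) ` (\<phi> ` \<Gamma>)"
    unfolding cc_def using iso_img[OF ph] by simp
  also have "\<dots> = (\<lambda>h. \<phi> (aff_mult (aff_mult h x) (aff_inv h))) ` \<Gamma>"
    unfolding image_image using phi_conj[OF ph _ x] by (intro image_cong) auto
  also have "\<dots> = \<phi> ` cc x" unfolding cc_def image_image ..
  finally show ?thesis .
qed

lemma phiL: assumes ph: "\<phi> \<in> iso G G" and z: "int_vec z"
  shows "snd (\<phi> (z, mat 1)) = mat 1" "\<phi> (z, mat 1) \<in> \<Gamma>"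
proof -
  have zin: "(z, mat 1) \<in> \<Gamma>" by (rule Lint[OF z])
  show c: "\<phi> (z, mat 1) \<in> \<Gamma>" by (rule iso_cl[OF ph zin])
  show "snd (\<phi> (z, mat 1)) = mat 1"
  proof (rule ccontr)
    assume "snd (\<phi> (z, mat 1)) \<noteq> mat 1"
    then have "infinite (cc (\<phi> (z, mat 1)))" by (rule cc_inf[OF c])
    moreover have "finite (cc (\<phi> (z, mat 1)))" unfolding cc_iso[OF ph zin] using cc_L[OF z] by simp
    ultimately show False by simp
  qed
qed

definition "psi \<phi> z = fst (\<phi> (z, mat 1))"

lemma psi: assumes ph: "\<phi> \<in> iso G G" and z: "int_vec z"
  shows "\<phi> (z, mat 1) = (psi \<phi> z, mat 1)" "int_vec (psi \<phi> z)"
proof -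
  show e: "\<phi> (z, mat 1) = (psi \<phi> z, mat 1)" unfolding psi_def using phiL[OF ph z] by (metis prod.collapse)
  show "int_vec (psi \<phi> z)" using phiL(2)[OF ph z] e L_int by simp
qed

lemma int_vec_add: "int_vec z \<Longrightarrow> int_vec w \<Longrightarrow> int_vec (z + w)"
  by (auto simp: int_vec_def)
lemma int_vec_neg: "int_vec z \<Longrightarrow> int_vec (- z)"
  by (auto simp: int_vec_def)

lemma psi_add: assumes ph: "\<phi> \<in> iso G G" and z: "int_vec z" and w: "int_vec w"
  shows "psi \<phi> (z + w) = psi \<phi> z + psi \<phi> w"
proof -
  have "(z, mat 1) \<otimes>\<^bsub>G\<^esub> (w, mat 1) = (z + w, mat 1)" by (simp add: aff_mult_def)
  then have "\<phi> (z + w, mat 1) = \<phi> (z, mat 1) \<otimes>\<^bsub>G\<^esub> \<phi> (w, mat 1)"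
    using hom_mult[OF iso_hom[OF ph], of "(z, mat 1)" "(w, mat 1)"] Lint[OF z] Lint[OF w] by simp
  then have "(psi \<phi> (z + w), mat 1) = aff_mult (psi \<phi> z, mat 1) (psi \<phi> w, mat 1)"
    using psi(1)[OF ph] z w int_vec_add[OF z w] by simp
  then show ?thesis by (simp add: aff_mult_def)
qed

lemma psi_0: assumes ph: "\<phi> \<in> iso G G" shows "psi \<phi> 0 = 0"
proof -
  have z: "int_vec (0::real^'n)" by (simp add: int_vec_def)
  have "psi \<phi> (0 + 0) = psi \<phi> 0 + psi \<phi> 0" by (rule psi_add[OF ph z z])
  then show ?thesis by simp
qed

lemma psi_neg: assumes ph: "\<phi> \<in> iso G G" and z: "int_vec z" shows "psi \<phi> (- z) = - psi \<phi> z"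
proof -
  have "psi \<phi> (z + - z) = psi \<phi> z + psi \<phi> (- z)" by (rule psi_add[OF ph z int_vec_neg[OF z]])
  then show ?thesis using psi_0[OF ph] by (simp add: eq_neg_iff_add_eq_0 add.commute)
qed

lemma psi_nat: assumes ph: "\<phi> \<in> iso G G" and z: "int_vec z"
  shows "psi \<phi> (real n *\<^sub>R z) = real n *\<^sub>R psi \<phi> z"
proof (induction n)
  case 0 then show ?case using psi_0[OF ph] by simp
next
  case (Suc n)
  have i: "int_vec (real n *\<^sub>R z)" by (rule int_vec_scaleR[OF z]) simp
  have "psi \<phi> (real (Suc n) *\<^sub>R z) = psi \<phi> (real n *\<^sub>R z + z)" by (simp add: algebra_simps)
  also have "\<dots> = real n *\<^sub>R psi \<phi> z + psi \<phi> z" using psi_add[OF ph i z] Suc by simp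
  finally show ?case by (simp add: algebra_simps)
qed

lemma psi_int: assumes ph: "\<phi> \<in> iso G G" and z: "int_vec z" and c: "c \<in> \<int>"
  shows "psi \<phi> (c *\<^sub>R z) = c *\<^sub>R psi \<phi> z"
proof -
  obtain m where m: "c = of_int m" using c by (auto elim: Ints_cases)
  show ?thesis
  proof (cases "m \<ge> 0")
    case True
    then have "c = real (nat m)" using m by simp
    then show ?thesis using psi_nat[OF ph z] by simp
  next
    case False
    then have cc: "c = - real (nat (- m))" using m by simp
    have i: "int_vec (real (nat (- m)) *\<^sub>R z)" by (rule int_vec_scaleR[OF z]) simp
    have "psi \<phi> (c *\<^sub>R z) = psi \<phi> (- (real (nat (- m)) *\<^sub>R z))" using cc by simp
    also have "\<dots> = - (real (nat (- m)) *\<^sub>R psi \<phi> z)" using psi_neg[OF ph i] psi_nat[OF ph z] by simp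
    finally show ?thesis using cc by simp
  qed
qed

lemma psi_sum: assumes ph: "\<phi> \<in> iso G G" and S: "finite S"
  shows "(\<forall>i\<in>S. int_vec (v i)) \<longrightarrow> psi \<phi> (\<Sum>i\<in>S. v i) = (\<Sum>i\<in>S. psi \<phi> (v i))"
  using S
proof (induction S rule: finite_induct)
  case empty then show ?case using psi_0[OF ph] by simp
next
  case (insert x F)
  show ?case
  proof
    assume a: "\<forall>i\<in>insert x F. int_vec (v i)"
    have s: "int_vec (\<Sum>i\<in>F. v i)" using a by (auto simp: int_vec_def sum_component intro!: Ints_sum)
    have "psi \<phi> (\<Sum>i\<in>insert x F. v i) = psi \<phi> (v x + (\<Sum>i\<in>F. v i))" using insert.hyps by simp
    also have "\<dots> = psi \<phi> (v x) + psi \<phi> (\<Sum>i\<in>F. v i)" using psi_add[OF ph _ s] a by simp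
    finally show "psi \<phi> (\<Sum>i\<in>insert x F. v i) = (\<Sum>i\<in>insert x F. psi \<phi> (v i))"
      using insert a by simp
  qed
qed

lemma exD: assumes ph: "\<phi> \<in> iso G G"
  shows "\<exists>D. int_mat D \<and> (\<forall>z. int_vec z \<longrightarrow> \<phi> (z, mat 1) = (D *v z, mat 1))"
proof -
  define D :: "real^'n^'n" where "D = (\<chi> i j. psi \<phi> (axis j 1) $ i)"
  have col: "column j D = psi \<phi> (axis j 1)" for j by (simp add: D_def column_def vec_eq_iff)
  have "int_mat D" unfolding int_mat_def D_def using psi(2)[OF ph int_vec_axis] by (simp add: int_vec_def)
  moreover have "\<phi> (z, mat 1) = (D *v z, mat 1)" if z: "int_vec z" for z
  proof -
    have "z = (\<Sum>i\<in>UNIV. z $ i *\<^sub>R axis i 1)" using basis_expansion[of z] by (simp add: scalar_mult_eq_scaleR)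
    then have "psi \<phi> z = psi \<phi> (\<Sum>i\<in>UNIV. z $ i *\<^sub>R axis i 1)" by simp
    also have "\<dots> = (\<Sum>i\<in>UNIV. psi \<phi> (z $ i *\<^sub>R axis i 1))"
    proof -
      have "\<forall>i\<in>UNIV. int_vec (z $ i *\<^sub>R axis i (1::real))"
        using z int_vec_scaleR[OF int_vec_axis] unfolding int_vec_def[of z] by blast
      then show ?thesis using psi_sum[OF ph, of UNIV "\<lambda>i. z $ i *\<^sub>R axis i 1"] by simp
    qed
    also have "\<dots> = (\<Sum>i\<in>UNIV. z $ i *\<^sub>R psi \<phi> (axis i 1))"
      using psi_int[OF ph int_vec_axis] z by (simp add: int_vec_def)
    also have "\<dots> = D *v z" by (simp add: matrix_mult_sum col scalar_mult_eq_scaleR)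
    finally show ?thesis using psi(1)[OF ph z] by simp
  qed
  ultimately show ?thesis by blast
qed

end

context cryst begin

definition "Dphi \<phi> D \<longleftrightarrow> int_mat D \<and> (\<forall>z. int_vec z \<longrightarrow> \<phi> (z, mat 1) = (D *v z, mat 1))"

lemma exD': "\<phi> \<in> iso G G \<Longrightarrow> \<exists>D. Dphi \<phi> D" unfolding Dphi_def by (rule exD)

lemma inv_iso: "\<phi> \<in> iso G G \<Longrightarrow> inv_into \<Gamma> \<phi> \<in> iso G G"
  using group.iso_set_sym[OF grp, of \<phi> G] by simp

lemma DD': assumes ph: "\<phi> \<in> iso G G" and D: "Dphi \<phi> D" and D': "Dphi (inv_into \<Gamma> \<phi>) D'"
  shows "D ** D' = mat 1"
proof (rule mat_eq_axis)
  fix j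
  define z :: "real^'n" where "z = axis j 1"
  have z: "int_vec z" unfolding z_def by (rule int_vec_axis)
  have zin: "(z, mat 1) \<in> \<phi> ` \<Gamma>" using Lint[OF z] iso_img[OF ph] by simp
  have e1: "inv_into \<Gamma> \<phi> (z, mat 1) = (D' *v z, mat 1)" using D' z unfolding Dphi_def by blast
  have iz: "int_vec (D' *v z)" using D' z int_mat_vec unfolding Dphi_def by blast
  have "(z, mat 1) = \<phi> (inv_into \<Gamma> \<phi> (z, mat 1))" using f_inv_into_f[OF zin] by simp
  also have "\<dots> = (D *v (D' *v z), mat 1)" using e1 D iz unfolding Dphi_def by simp
  finally have "D *v (D' *v z) = z" by simp
  then show "(D ** D') *v axis j 1 = mat 1 *v axis j 1" unfolding z_def by (simp add: matrix_vector_mul_assoc)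
qed

lemma conjD: assumes ph: "\<phi> \<in> iso G G" and D: "Dphi \<phi> D" and E: "D ** E = mat 1"
  and A: "A \<in> holonomy \<Gamma>"
  shows "D ** A ** E \<in> holonomy \<Gamma>"
proof -
  obtain a where aA: "(a, A) \<in> \<Gamma>" using holo_elem[OF A] by blast
  define p where "p = \<phi> (a, A)"
  have p: "p \<in> \<Gamma>" unfolding p_def by (rule iso_cl[OF ph aA])
  have key: "snd p *v (D *v z) = D *v (A *v z)" if z: "int_vec z" for z
  proof -
    have zin: "(z, mat 1) \<in> \<Gamma>" by (rule Lint[OF z])
    have Az: "int_vec (A *v z)" by (rule int_mat_vec[OF holo_int[OF A] z])
    have c1: "aff_mult (aff_mult (a, A) (z, mat 1)) (aff_inv (a, A)) = (A *v z, mat 1)"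
      using conj_tr[OF aA, of z] by (simp add: aff_assoc)
    have "\<phi> (aff_mult (aff_mult (a, A) (z, mat 1)) (aff_inv (a, A)))
        = aff_mult (aff_mult p (\<phi> (z, mat 1))) (aff_inv p)"
      using phi_conj[OF ph aA zin] p_def by simp
    also have "\<dots> = aff_mult (aff_mult p (D *v z, mat 1)) (aff_inv p)" using D z unfolding Dphi_def by simp
    also have "\<dots> = (snd p *v (D *v z), mat 1)" using conj_tr[OF p, of "D *v z"] by (simp add: aff_assoc)
    finally have "\<phi> (A *v z, mat 1) = (snd p *v (D *v z), mat 1)" using c1 by simp
    moreover have "\<phi> (A *v z, mat 1) = (D *v (A *v z), mat 1)" using D Az unfolding Dphi_def by simp
    ultimately show ?thesis by simp
  qed
  have "snd p ** D = D ** A"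
    by (rule mat_eq_axis) (simp add: matrix_vector_mul_assoc[symmetric] key int_vec_axis)
  then have "snd p = D ** A ** E"
    by (metis E matrix_mul_assoc matrix_mul_rid)
  then show ?thesis using holo_snd[OF p] by simp
qed

lemma Dnorm: assumes ph: "\<phi> \<in> iso G G" and D: "Dphi \<phi> D"
  shows "D \<in> normaliser_GLZ (holonomy \<Gamma>)"
proof -
  have ph': "inv_into \<Gamma> \<phi> \<in> iso G G" by (rule inv_iso[OF ph])
  obtain D' where D': "Dphi (inv_into \<Gamma> \<phi>) D'" using exD'[OF ph'] by blast
  have e1: "D ** D' = mat 1" by (rule DD'[OF ph D D'])
  have e2: "D' ** D = mat 1" using e1 matrix_left_right_inverse by blast
  have mi: "matrix_inv D = D'" by (rule minv_unique[OF e1])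
  have inv: "invertible D" unfolding invertible_def using e1 e2 by blast
  have gl: "D \<in> GL_Z" unfolding GL_Z_def using D D' inv mi unfolding Dphi_def by simp
  have "(\<lambda>A. D ** A ** matrix_inv D) ` holonomy \<Gamma> = holonomy \<Gamma>"
  proof
    show "(\<lambda>A. D ** A ** matrix_inv D) ` holonomy \<Gamma> \<subseteq> holonomy \<Gamma>"
      using conjD[OF ph D e1] mi by auto
    show "holonomy \<Gamma> \<subseteq> (\<lambda>A. D ** A ** matrix_inv D) ` holonomy \<Gamma>"
    proof
      fix B assume B: "B \<in> holonomy \<Gamma>"
      have "D' ** B ** D \<in> holonomy \<Gamma>" by (rule conjD[OF ph' D' e2 B])
      moreover have "B = D ** (D' ** B ** D) ** D'"
        by (simp add: matrix_mul_assoc[symmetric] e1) (simp add: matrix_mul_assoc e1)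
      ultimately show "B \<in> (\<lambda>A. D ** A ** matrix_inv D) ` holonomy \<Gamma>" using mi by auto
    qed
  qed
  then show ?thesis unfolding normaliser_GLZ_def using gl by simp
qed

definition "Eset D g = {x\<in>\<Gamma>. \<exists>z. int_vec z \<and> x = (z + fst g - snd g *v (D *v z), snd g)}"

lemma tw_E: assumes ph: "\<phi> \<in> iso G G" and D: "Dphi \<phi> D" and g: "g \<in> \<Gamma>"
  shows "tw G Lset \<phi> g = Eset D g"
proof -
  have el: "(z, mat 1) \<otimes>\<^bsub>G\<^esub> g \<otimes>\<^bsub>G\<^esub> inv\<^bsub>G\<^esub> (\<phi> (z, mat 1)) = (z + fst g - snd g *v (D *v z), snd g)"
    if z: "int_vec z" for z
  proof -
    have zi: "int_vec (D *v z)" using D z int_mat_vec unfolding Dphi_def by blast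
    have "\<phi> (z, mat 1) = (D *v z, mat 1)" using D z unfolding Dphi_def by blast
    then have "inv\<^bsub>G\<^esub> (\<phi> (z, mat 1)) = (- (D *v z), mat 1)"
      using invG[OF Lint[OF zi]] by (simp add: aff_inv_def)
    then show ?thesis by (simp add: aff_mult_def mvneg)
  qed
  show ?thesis
  proof
    show "tw G Lset \<phi> g \<subseteq> Eset D g"
    proof
      fix x assume "x \<in> tw G Lset \<phi> g"
      then have x: "x \<in> \<Gamma>" and "\<exists>l\<in>Lset. x = l \<otimes>\<^bsub>G\<^esub> g \<otimes>\<^bsub>G\<^esub> inv\<^bsub>G\<^esub> (\<phi> l)"
        unfolding tw_mem by auto
      then obtain l where l: "l \<in> Lset" and xe: "x = l \<otimes>\<^bsub>G\<^esub> g \<otimes>\<^bsub>G\<^esub> inv\<^bsub>G\<^esub> (\<phi> l)" by blast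
      obtain z where lz: "l = (z, mat 1)" and z: "int_vec z" using l L_iff unfolding Lset_def by blast
      show "x \<in> Eset D g" unfolding Eset_def using x xe el[OF z] lz z by auto
    qed
    show "Eset D g \<subseteq> tw G Lset \<phi> g"
    proof
      fix x assume "x \<in> Eset D g"
      then obtain z where x: "x \<in> \<Gamma>" and z: "int_vec z" and xe: "x = (z + fst g - snd g *v (D *v z), snd g)"
        unfolding Eset_def by blast
      have l: "(z, mat 1) \<in> Lset" unfolding Lset_def using Lint[OF z] by simp
      have e: "x = (z, mat 1) \<otimes>\<^bsub>G\<^esub> g \<otimes>\<^bsub>G\<^esub> inv\<^bsub>G\<^esub> (\<phi> (z, mat 1))"
        by (simp only: el[OF z] xe)
      have "\<exists>h\<in>Lset. x = h \<otimes>\<^bsub>G\<^esub> g \<otimes>\<^bsub>G\<^esub> inv\<^bsub>G\<^esub> (\<phi> h)"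
        by (rule bexI[of "\<lambda>h. x = h \<otimes>\<^bsub>G\<^esub> g \<otimes>\<^bsub>G\<^esub> inv\<^bsub>G\<^esub> (\<phi> h)" "(z, mat 1)", OF e l])
      then show "x \<in> tw G Lset \<phi> g" unfolding tw_mem using x by simp
    qed
  qed
qed

definition "Mb = (\<Sum>D\<in>normaliser_GLZ (holonomy \<Gamma>). if finite (Eset D ` \<Gamma>) then card (Eset D ` \<Gamma>) else 0)"

lemma spec_sub: assumes fN: "finite (normaliser_GLZ (holonomy \<Gamma>))"
  shows "reid_spectrum G \<subseteq> insert \<infinity> (enat ` {..Mb})"
proof
  fix r assume "r \<in> reid_spectrum G"
  then obtain \<phi> where ph: "\<phi> \<in> iso G G" and r: "r = reid_number G \<phi>" unfolding reid_spectrum_def by auto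
  obtain D where D: "Dphi \<phi> D" using exD'[OF ph] by blast
  have DN: "D \<in> normaliser_GLZ (holonomy \<Gamma>)" by (rule Dnorm[OF ph D])
  have hm: "\<phi> \<in> hom G G" by (rule iso_hom[OF ph])
  have img: "tw G Lset \<phi> ` \<Gamma> = Eset D ` \<Gamma>" using tw_E[OF ph D] by (intro image_cong) auto
  show "r \<in> insert \<infinity> (enat ` {..Mb})"
  proof (cases "finite (reid_classes G \<phi>)")
    case False then show ?thesis using r unfolding reid_number_def by simp
  next
    case True
    have "finite (tw G Lset \<phi> ` carrier G)"
      by (rule group.count_fin[OF grp L_sub hm K_fin dec True])
    then have fE: "finite (Eset D ` \<Gamma>)" using img by simp
    have "card (reid_classes G \<phi>) \<le> card (tw G Lset \<phi> ` carrier G)"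
      using group.count_le[OF grp L_sub hm] fE img by simp
    also have "\<dots> = card (Eset D ` \<Gamma>)" using img by simp
    also have "\<dots> \<le> Mb" unfolding Mb_def
      using member_le_sum[OF DN, of "\<lambda>D. if finite (Eset D ` \<Gamma>) then card (Eset D ` \<Gamma>) else 0"] fN fE
      by simp
    finally show ?thesis using r True unfolding reid_number_def by simp
  qed
qed

end

theorem theorem5p6:
  fixes \<Gamma> :: "'n::finite aff set"
  assumes "crystallographic \<Gamma>"
    and "finite (normaliser_GLZ (holonomy \<Gamma>))"
  shows "finite (reid_spectrum (aff_group\<lparr>carrier := \<Gamma>\<rparr>))"
proof -
  interpret cryst \<Gamma> by (rule cryst.intro[OF assms(1)])
  show ?thesis using spec_sub[OF assms(2)] finite_subset by (metis finite.insertI finite_atMost finite_imageI)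
qed

end
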